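(* Let $\alpha=(\alpha_n)_{n\ge1}$ be a non-negative non-increasing null sequence with $\alpha_1\le1$ and let $\omega\in(0,1)$. Suppose $C>0$ is a constant such that $$K^{(\omega)}_{n+j}(\alpha)\ge C\Big(\sum_{i=0}^nK^{(\omega)}_i(\alpha)\Big)^2$$ for all $j\in\mathbb N$ and $n\in\mathbb N\cup\{0\}$. Then $\langle\alpha\rangle$ is a stable Calkin space.
   Context: $K^{(\omega)}_n(\alpha)=|\{m:\omega^{n+1}<\alpha_m\le\omega^n\}|$ for $n\ge0$. $c_0$: complex null sequences; $\beta^\star$: non-increasing rearrangement of $(|\beta_n|)$. A Calkin space is a linear subspace $\mathfrak i\subseteq c_0$ such that $\gamma\in\mathfrak i,\beta\in c_0,\beta^\star\le\gamma^\star$ imply $\beta\in\mathfrak i$; $\langle\alpha\rangle$ is the smallest Calkin space containing $\alpha$. For $\beta,\gamma\in c_0$, $\beta\otimes\gamma$ is the non-increasing rearrangement with multiplicities of $(|\beta_i\gamma_j|)_{i,j}$; $\mathfrak i$ is stable if the smallest Calkin space containing all $\beta\otimes\gamma$, $\beta,\gamma\in\mathfrak i$, equals $\mathfrak i$. *)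

theory Defs
  imports "HOL-Analysis.Analysis"
begin

definition c0 :: "(nat \<Rightarrow> complex) set" where
  "c0 = {\<beta>. \<beta> \<longlonglongrightarrow> 0}"

text \<open>Non-increasing rearrangement (with multiplicities) of a non-negative null family
  f indexed by an infinite type: the n-th term (counting from 0) is
  inf over finite sets F of at most n indices of sup of f outside F.\<close>
definition rearr :: "('a \<Rightarrow> real) \<Rightarrow> nat \<Rightarrow> real" where
  "rearr f n = Inf {Sup (f ` (UNIV - F)) | F. finite F \<and> card F \<le> n}"

definition dstar :: "(nat \<Rightarrow> complex) \<Rightarrow> nat \<Rightarrow> real" where
  "dstar \<beta> = rearr (\<lambda>k. norm (\<beta> k))"

definition calkin :: "(nat \<Rightarrow> complex) set \<Rightarrow> bool" where
  "calkin I \<longleftrightarrow> I \<subseteq> c0 \<and> (\<lambda>_. 0) \<in> I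
     \<and> (\<forall>x\<in>I. \<forall>y\<in>I. (\<lambda>n. x n + y n) \<in> I)
     \<and> (\<forall>c. \<forall>x\<in>I. (\<lambda>n. c * x n) \<in> I)
     \<and> (\<forall>\<gamma>\<in>I. \<forall>\<beta>\<in>c0. (\<forall>n. dstar \<beta> n \<le> dstar \<gamma> n) \<longrightarrow> \<beta> \<in> I)"

definition calkin_hull :: "(nat \<Rightarrow> complex) set \<Rightarrow> (nat \<Rightarrow> complex) set" where
  "calkin_hull S = \<Inter> {I. calkin I \<and> S \<subseteq> I}"

definition tensor :: "(nat \<Rightarrow> complex) \<Rightarrow> (nat \<Rightarrow> complex) \<Rightarrow> nat \<Rightarrow> complex" where
  "tensor \<beta> \<gamma> = (\<lambda>n. complex_of_real (rearr (\<lambda>(i, j). norm (\<beta> i * \<gamma> j)) n))"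

definition stable :: "(nat \<Rightarrow> complex) set \<Rightarrow> bool" where
  "stable I \<longleftrightarrow> calkin I \<and> calkin_hull {tensor \<beta> \<gamma> | \<beta> \<gamma>. \<beta> \<in> I \<and> \<gamma> \<in> I} = I"

definition Kw :: "real \<Rightarrow> (nat \<Rightarrow> real) \<Rightarrow> nat \<Rightarrow> nat" where
  "Kw \<omega> \<alpha> n = card {m. \<omega> ^ (n + 1) < \<alpha> m \<and> \<alpha> m \<le> \<omega> ^ n}"

end

theory Submission
  imports Defs "HOL-Library.Nat_Bijection"
begin



lemma Sup_img_nonneg:
  fixes f :: "'a \<Rightarrow> real"
  assumes "\<And>x. f x \<ge> 0" "S \<noteq> {}" "bdd_above (f ` S)"
  shows "Sup (f ` S) \<ge> 0"
proof -
  obtain x where "x \<in> S" using assms(2) by auto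
  then have "f x \<le> Sup (f ` S)" using assms(3) by (intro cSUP_upper) auto
  with assms(1)[of x] show ?thesis by linarith
qed

lemma infinite_diff_ne:
  assumes "infinite (UNIV :: 'a set)" "finite (F :: 'a set)"
  shows "UNIV - F \<noteq> {}"
  using assms by (metis Diff_empty Diff_eq_empty_iff finite_subset subset_UNIV)

lemma rearr_nonneg:
  fixes f :: "'a \<Rightarrow> real"
  assumes inf: "infinite (UNIV :: 'a set)" and f0: "\<And>x. f x \<ge> 0" and bd: "bdd_above (range f)"
  shows "rearr f n \<ge> 0"
  unfolding rearr_def
proof (rule cInf_greatest)
  show "{Sup (f ` (UNIV - F)) |F. finite F \<and> card F \<le> n} \<noteq> {}" by (auto intro: exI[of _ "{}"])
next
  fix x assume "x \<in> {Sup (f ` (UNIV - F)) |F. finite F \<and> card F \<le> n}"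
  then obtain F where F: "finite F" "x = Sup (f ` (UNIV - F))" by auto
  show "0 \<le> x" unfolding F(2)
    by (rule Sup_img_nonneg[OF f0 infinite_diff_ne[OF inf F(1)]]) (use bd in \<open>auto intro: bdd_above_mono\<close>)
qed

lemma rearr_le_elem:
  fixes f :: "'a \<Rightarrow> real"
  assumes inf: "infinite (UNIV :: 'a set)" and f0: "\<And>x. f x \<ge> 0" and bd: "bdd_above (range f)"
    and F: "finite F" "card F \<le> n"
  shows "rearr f n \<le> Sup (f ` (UNIV - F))"
  unfolding rearr_def
proof (rule cInf_lower)
  show "Sup (f ` (UNIV - F)) \<in> {Sup (f ` (UNIV - F)) |F. finite F \<and> card F \<le> n}" using F by auto
  show "bdd_below {Sup (f ` (UNIV - F)) |F. finite F \<and> card F \<le> n}"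
  proof (rule bdd_belowI[of _ 0])
    fix x assume "x \<in> {Sup (f ` (UNIV - F)) |F. finite F \<and> card F \<le> n}"
    then obtain G where G: "finite G" "x = Sup (f ` (UNIV - G))" by auto
    show "0 \<le> x" unfolding G(2)
      by (rule Sup_img_nonneg[OF f0 infinite_diff_ne[OF inf G(1)]]) (use bd in \<open>auto intro: bdd_above_mono\<close>)
  qed
qed

lemma rearr_ge:
  fixes f :: "'a \<Rightarrow> real"
  assumes S: "finite S" "card S > n" and v: "\<And>x. x \<in> S \<Longrightarrow> v \<le> f x" and bd: "bdd_above (range f)"
  shows "v \<le> rearr f n"
  unfolding rearr_def
proof (rule cInf_greatest)
  show "{Sup (f ` (UNIV - F)) |F. finite F \<and> card F \<le> n} \<noteq> {}" by (auto intro: exI[of _ "{}"])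
next
  fix x assume "x \<in> {Sup (f ` (UNIV - F)) |F. finite F \<and> card F \<le> n}"
  then obtain F where F: "finite F" "card F \<le> n" "x = Sup (f ` (UNIV - F))" by auto
  have "\<not> S \<subseteq> F"
  proof
    assume "S \<subseteq> F" then have "card S \<le> card F" using F(1) by (simp add: card_mono)
    with F(2) S(2) show False by linarith
  qed
  then obtain y where y: "y \<in> S" "y \<notin> F" by auto
  have "f y \<le> Sup (f ` (UNIV - F))" using y bd by (intro cSUP_upper) (auto intro: bdd_above_mono)
  with v[OF y(1)] show "v \<le> x" unfolding F(3) by linarith
qed

definition domin :: "('a \<Rightarrow> real) \<Rightarrow> ('b \<Rightarrow> real) \<Rightarrow> real \<Rightarrow> nat \<Rightarrow> ('a \<Rightarrow> 'b) \<Rightarrow> bool" where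
  "domin f g c k \<phi> \<longleftrightarrow> c > 0 \<and> k > 0 \<and> (\<forall>x. f x \<le> c * g (\<phi> x))
     \<and> (\<forall>y. finite {x. \<phi> x = y \<and> f x \<noteq> 0} \<and> card {x. \<phi> x = y \<and> f x \<noteq> 0} \<le> k)"

lemma rearr_domin:
  fixes f :: "'a \<Rightarrow> real" and g :: "'b \<Rightarrow> real"
  assumes infA: "infinite (UNIV :: 'a set)" and infB: "infinite (UNIV :: 'b set)"
    and f0: "\<And>x. f x \<ge> 0" and g0: "\<And>x. g x \<ge> 0" and gb: "bdd_above (range g)"
    and d: "domin f g c k \<phi>"
  shows "rearr f n \<le> c * rearr g (n div k)"
proof -
  from d have c: "c > 0" and k: "k > 0" and le: "\<And>x. f x \<le> c * g (\<phi> x)"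
    and fin: "\<And>y. finite {x. \<phi> x = y \<and> f x \<noteq> 0}" and cd: "\<And>y. card {x. \<phi> x = y \<and> f x \<noteq> 0} \<le> k"
    unfolding domin_def by auto
  obtain B where B: "\<And>y. g y \<le> B" using gb by (auto simp: bdd_above_def)
  have fb: "bdd_above (range f)"
  proof (rule bdd_aboveI[of _ "c * B"])
    fix z assume "z \<in> range f" then obtain x where "z = f x" by auto
    then show "z \<le> c * B" using le[of x] B[of "\<phi> x"] c
      by (meson order_trans mult_left_mono less_imp_le)
  qed
  have key: "rearr f n / c \<le> rearr g (n div k)"
    unfolding rearr_def[of g]
  proof (rule cInf_greatest)
    show "{Sup (g ` (UNIV - F)) |F. finite F \<and> card F \<le> n div k} \<noteq> {}" by (auto intro: exI[of _ "{}"])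
  next
    fix z assume "z \<in> {Sup (g ` (UNIV - F)) |F. finite F \<and> card F \<le> n div k}"
    then obtain F where F: "finite F" "card F \<le> n div k" "z = Sup (g ` (UNIV - F))" by auto
    define F' where "F' = (\<Union>y\<in>F. {x. \<phi> x = y \<and> f x \<noteq> 0})"
    have F'fin: "finite F'" unfolding F'_def using F(1) fin by auto
    have "card F' \<le> (\<Sum>y\<in>F. card {x. \<phi> x = y \<and> f x \<noteq> 0})" unfolding F'_def by (rule card_UN_le[OF F(1)])
    also have "\<dots> \<le> (\<Sum>y\<in>F. k)" by (rule sum_mono) (rule cd)
    also have "\<dots> = k * card F" by simp
    also have "\<dots> \<le> k * (n div k)" using F(2) by simp
    also have "\<dots> \<le> n" by simp
    finally have F'card: "card F' \<le> n" .
    have ne: "UNIV - F \<noteq> {}" by (rule infinite_diff_ne[OF infB F(1)])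
    have gbF: "bdd_above (g ` (UNIV - F))" using gb by (auto intro: bdd_above_mono)
    have z0: "z \<ge> 0" unfolding F(3) by (rule Sup_img_nonneg[OF g0 ne gbF])
    have "rearr f n \<le> Sup (f ` (UNIV - F'))" by (rule rearr_le_elem[OF infA f0 fb F'fin F'card])
    also have "\<dots> \<le> c * z"
    proof (rule cSup_least)
      show "f ` (UNIV - F') \<noteq> {}" using infinite_diff_ne[OF infA F'fin] by auto
    next
      fix w assume "w \<in> f ` (UNIV - F')"
      then obtain x where x: "x \<notin> F'" "w = f x" by auto
      show "w \<le> c * z"
      proof (cases "\<phi> x \<in> F")
        case True
        then have "f x = 0" using x(1) unfolding F'_def by auto
        then show ?thesis using x(2) c z0 by simp
      next
        case False
        then have "g (\<phi> x) \<le> z" unfolding F(3) using gbF by (intro cSUP_upper) auto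
        then have "c * g (\<phi> x) \<le> c * z" using c by simp
        then show ?thesis using le[of x] x(2) by linarith
      qed
    qed
    finally show "rearr f n / c \<le> z" using c by (simp add: divide_le_eq mult.commute)
  qed
  then show ?thesis using c by (simp add: divide_le_eq mult.commute)
qed




lemma domin_comp:
  assumes d1: "domin f g c1 k1 \<phi>1" and d2: "domin g h c2 k2 \<phi>2"
    and f0: "\<And>x. f x \<ge> 0" and g0: "\<And>x. g x \<ge> 0"
  shows "domin f h (c1 * c2) (k1 * k2) (\<lambda>x. \<phi>2 (\<phi>1 x))"
proof -
  from d1 have c1: "c1 > 0" "k1 > 0" and le1: "\<And>x. f x \<le> c1 * g (\<phi>1 x)"
    and fin1: "\<And>y. finite {x. \<phi>1 x = y \<and> f x \<noteq> 0}" and cd1: "\<And>y. card {x. \<phi>1 x = y \<and> f x \<noteq> 0} \<le> k1"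
    unfolding domin_def by auto
  from d2 have c2: "c2 > 0" "k2 > 0" and le2: "\<And>x. g x \<le> c2 * h (\<phi>2 x)"
    and fin2: "\<And>y. finite {x. \<phi>2 x = y \<and> g x \<noteq> 0}" and cd2: "\<And>y. card {x. \<phi>2 x = y \<and> g x \<noteq> 0} \<le> k2"
    unfolding domin_def by auto
  have le: "f x \<le> c1 * c2 * h (\<phi>2 (\<phi>1 x))" for x
  proof -
    have "c1 * g (\<phi>1 x) \<le> c1 * (c2 * h (\<phi>2 (\<phi>1 x)))" using le2 c1 by (simp add: mult_left_mono)
    then show ?thesis using le1[of x] by (simp add: mult.assoc)
  qed
  have sub: "{x. \<phi>2 (\<phi>1 x) = z \<and> f x \<noteq> 0} \<subseteq> (\<Union>y\<in>{y. \<phi>2 y = z \<and> g y \<noteq> 0}. {x. \<phi>1 x = y \<and> f x \<noteq> 0})" for z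
  proof
    fix x assume x: "x \<in> {x. \<phi>2 (\<phi>1 x) = z \<and> f x \<noteq> 0}"
    then have "f x > 0" using f0[of x] by auto
    then have "g (\<phi>1 x) \<noteq> 0" using le1[of x] by auto
    then show "x \<in> (\<Union>y\<in>{y. \<phi>2 y = z \<and> g y \<noteq> 0}. {x. \<phi>1 x = y \<and> f x \<noteq> 0})" using x by auto
  qed
  have finU: "finite (\<Union>y\<in>{y. \<phi>2 y = z \<and> g y \<noteq> 0}. {x. \<phi>1 x = y \<and> f x \<noteq> 0})" for z
    using fin1 fin2 by auto
  have "card {x. \<phi>2 (\<phi>1 x) = z \<and> f x \<noteq> 0} \<le> k1 * k2" for z
  proof -
    have "card {x. \<phi>2 (\<phi>1 x) = z \<and> f x \<noteq> 0} \<le> card (\<Union>y\<in>{y. \<phi>2 y = z \<and> g y \<noteq> 0}. {x. \<phi>1 x = y \<and> f x \<noteq> 0})"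
      by (rule card_mono[OF finU sub])
    also have "\<dots> \<le> (\<Sum>y\<in>{y. \<phi>2 y = z \<and> g y \<noteq> 0}. card {x. \<phi>1 x = y \<and> f x \<noteq> 0})"
      by (rule card_UN_le[OF fin2])
    also have "\<dots> \<le> (\<Sum>y\<in>{y. \<phi>2 y = z \<and> g y \<noteq> 0}. k1)" by (rule sum_mono) (rule cd1)
    also have "\<dots> = k1 * card {y. \<phi>2 y = z \<and> g y \<noteq> 0}" by simp
    also have "\<dots> \<le> k1 * k2" using cd2 by simp
    finally show ?thesis .
  qed
  then show ?thesis unfolding domin_def using c1 c2 le finite_subset[OF sub finU] by auto
qed

lemma card_le1_inj:
  assumes "inj_on \<sigma> S"
  shows "finite {x. \<sigma> x = y \<and> x \<in> S} \<and> card {x. \<sigma> x = y \<and> x \<in> S} \<le> 1"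
proof -
  have "{x. \<sigma> x = y \<and> x \<in> S} = {} \<or> (\<exists>x. {x. \<sigma> x = y \<and> x \<in> S} = {x})"
    using assms unfolding inj_on_def by blast
  then show ?thesis
  proof
    assume e: "{x. \<sigma> x = y \<and> x \<in> S} = {}" show ?thesis unfolding e by simp
  next
    assume "\<exists>x. {x. \<sigma> x = y \<and> x \<in> S} = {x}"
    then obtain x where "{x. \<sigma> x = y \<and> x \<in> S} = {x}" by blast
    then show ?thesis by simp
  qed
qed

lemma rank_props:
  fixes e :: "'a \<Rightarrow> nat"
  assumes A: "finite A" and inj: "inj_on e A"
  shows "\<And>p. p \<in> A \<Longrightarrow> card {q\<in>A. e q < e p} < card A"
    and "inj_on (\<lambda>p. card {q\<in>A. e q < e p}) A"
proof -
  fix p assume p: "p \<in> A"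
  show "card {q\<in>A. e q < e p} < card A" using p by (intro psubset_card_mono A) auto
next
  have lt: "card {q\<in>A. e q < e p} < card {q\<in>A. e q < e p'}" if "p \<in> A" "p' \<in> A" "e p < e p'" for p p'
  proof (rule psubset_card_mono)
    show "finite {q\<in>A. e q < e p'}" using A by auto
    show "{q\<in>A. e q < e p} \<subset> {q\<in>A. e q < e p'}" using that by auto
  qed
  show "inj_on (\<lambda>p. card {q\<in>A. e q < e p}) A"
  proof (rule inj_onI)
    fix p p' assume pp: "p \<in> A" "p' \<in> A" "card {q\<in>A. e q < e p} = card {q\<in>A. e q < e p'}"
    show "p = p'"
    proof (rule ccontr)
      assume "p \<noteq> p'"
      then have "e p \<noteq> e p'" using inj pp by (auto simp: inj_on_def)
      then show False using lt[of p p'] lt[of p' p] pp by linarith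
    qed
  qed
qed

lemma finite_ge_null:
  fixes f :: "nat \<Rightarrow> real"
  assumes "f \<longlonglongrightarrow> 0" "v > 0"
  shows "finite {m. f m \<ge> v}"
proof -
  have "eventually (\<lambda>m. f m < v) sequentially" using order_tendstoD(2)[OF assms] .
  then obtain N where N: "\<And>m. m \<ge> N \<Longrightarrow> f m < v" by (auto simp: eventually_sequentially)
  have "{m. f m \<ge> v} \<subseteq> {..<N}" using N by (force simp: not_le[symmetric])
  then show ?thesis by (rule finite_subset) simp
qed

lemma null_bdd:
  fixes f :: "nat \<Rightarrow> real"
  assumes "f \<longlonglongrightarrow> 0"
  shows "bdd_above (range f)"
proof -
  have "Bseq f" using assms by (rule convergent_imp_Bseq[OF convergentI])
  then obtain K where "\<And>n. norm (f n) \<le> K" by (auto simp: Bseq_def)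
  then show ?thesis by (intro bdd_aboveI[of _ K]) (auto, meson abs_le_D1 order_trans real_norm_def)
qed

lemma rearr_sigma:
  fixes f :: "nat \<Rightarrow> real"
  assumes f0: "\<And>m. f m \<ge> 0" and lim: "f \<longlonglongrightarrow> 0"
  defines "\<sigma> \<equiv> \<lambda>m. card {m'. f m' > f m} + card {m'. m' < m \<and> f m' = f m}"
  shows "domin f (rearr f) 1 1 \<sigma>"
proof -
  have fing: "finite {m'. f m' > v}" if "v > 0" for v
    using finite_ge_null[OF lim that] by (rule finite_subset[rotated]) auto
  have bd: "bdd_above (range f)" by (rule null_bdd[OF lim])
  have lt: "\<sigma> m1 < \<sigma> m2" if "f m2 > 0" "f m1 > f m2" for m1 m2
  proof -
    have "{m'. f m' > f m1} \<union> {m'. m' < m1 \<and> f m' = f m1} \<union> {m1} \<subseteq> {m'. f m' > f m2}" using that by auto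
    then have "card ({m'. f m' > f m1} \<union> {m'. m' < m1 \<and> f m' = f m1} \<union> {m1}) \<le> card {m'. f m' > f m2}"
      by (rule card_mono[OF fing[OF that(1)], rotated])
    moreover have "card ({m'. f m' > f m1} \<union> {m'. m' < m1 \<and> f m' = f m1} \<union> {m1}) = \<sigma> m1 + 1"
    proof -
      have fA: "finite {m'. f m' > f m1}" using fing[of "f m1"] that by simp
      have fB: "finite {m'. m' < m1 \<and> f m' = f m1}" by (rule finite_subset[of _ "{..<m1}"]) auto
      have "{m'. f m' > f m1} \<union> {m'. m' < m1 \<and> f m' = f m1} \<union> {m1} = insert m1 ({m'. f m' > f m1} \<union> {m'. m' < m1 \<and> f m' = f m1})" by blast
      moreover have "card (insert m1 ({m'. f m' > f m1} \<union> {m'. m' < m1 \<and> f m' = f m1})) = card ({m'. f m' > f m1} \<union> {m'. m' < m1 \<and> f m' = f m1}) + 1"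
        using fA fB by (subst card_insert_disjoint) auto
      moreover have "card ({m'. f m' > f m1} \<union> {m'. m' < m1 \<and> f m' = f m1}) = card {m'. f m' > f m1} + card {m'. m' < m1 \<and> f m' = f m1}"
        using fA fB by (intro card_Un_disjoint) auto
      ultimately show ?thesis unfolding \<sigma>_def by simp
    qed
    ultimately show ?thesis unfolding \<sigma>_def by linarith
  qed
  have lt2: "\<sigma> m1 < \<sigma> m2" if "f m1 = f m2" "m1 < m2" for m1 m2
  proof -
    have "card {m'. m' < m1 \<and> f m' = f m1} < card {m'. m' < m2 \<and> f m' = f m2}"
      by (rule psubset_card_mono) (use that in auto)
    then show ?thesis unfolding \<sigma>_def using that by simp
  qed
  have inj: "inj_on \<sigma> {x. f x \<noteq> 0}"
  proof (rule inj_onI)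
    fix m1 m2 assume m: "m1 \<in> {x. f x \<noteq> 0}" "m2 \<in> {x. f x \<noteq> 0}" "\<sigma> m1 = \<sigma> m2"
    have p: "f m1 > 0" "f m2 > 0" using m f0[of m1] f0[of m2] by auto
    show "m1 = m2"
    proof (rule ccontr)
      assume ne: "m1 \<noteq> m2"
      show False
      proof (cases "f m1 = f m2")
        case True
        show False
        proof (cases "m1 < m2")
          case True then show False using lt2[of m1 m2] \<open>f m1 = f m2\<close> m(3) by simp
        next
          case False then have "m2 < m1" using ne by simp
          then show False using lt2[of m2 m1] \<open>f m1 = f m2\<close> m(3) by simp
        qed
      next
        case False
        show False
        proof (cases "f m1 > f m2")
          case True then show False using lt[of m2 m1] p m(3) by simp
        next
          case False then have "f m2 > f m1" using \<open>f m1 \<noteq> f m2\<close> by simp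
          then show False using lt[of m1 m2] p m(3) by simp
        qed
      qed
    qed
  qed
  have val: "f m \<le> rearr f (\<sigma> m)" for m
  proof (cases "f m = 0")
    case True then show ?thesis using rearr_nonneg[OF infinite_UNIV_nat f0 bd] by simp
  next
    case False
    then have p: "f m > 0" using f0[of m] by auto
    let ?S = "{m'. f m' > f m} \<union> {m'. m' \<le> m \<and> f m' = f m}"
    have eq: "{m'. m' \<le> m \<and> f m' = f m} = insert m {m'. m' < m \<and> f m' = f m}" by auto
    have "card ?S = card {m'. f m' > f m} + card {m'. m' \<le> m \<and> f m' = f m}"
      by (rule card_Un_disjoint) (use fing[OF p] in auto)
    also have "\<dots> = \<sigma> m + 1" unfolding eq \<sigma>_def by simp
    finally have cS: "card ?S = \<sigma> m + 1" .
    show ?thesis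
      by (rule rearr_ge[of ?S]) (use fing[OF p] cS bd in auto)
  qed
  have c1: "finite {x. \<sigma> x = y \<and> f x \<noteq> 0} \<and> card {x. \<sigma> x = y \<and> f x \<noteq> 0} \<le> 1" for y
  proof -
    have "{x. \<sigma> x = y \<and> f x \<noteq> 0} = {x. \<sigma> x = y \<and> x \<in> {x. f x \<noteq> 0}}" by simp
    then show ?thesis using card_le1_inj[OF inj, of y] by simp
  qed
  have v1: "\<forall>x. f x \<le> 1 * rearr f (\<sigma> x)" using val by simp
  show ?thesis unfolding domin_def by (intro conjI zero_less_one v1 allI c1)
qed




lemma rearr_dec_le:
  fixes a :: "nat \<Rightarrow> real"
  assumes a0: "\<And>m. a m \<ge> 0" and dec: "decseq a"
  shows "rearr a n \<le> a n"
proof -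
  have bd: "bdd_above (range a)" using dec by (intro bdd_aboveI[of _ "a 0"]) (auto simp: decseq_def)
  have "rearr a n \<le> Sup (a ` (UNIV - {..<n}))" by (rule rearr_le_elem[OF infinite_UNIV_nat a0 bd]) auto
  also have "\<dots> \<le> a n"
  proof (rule cSup_least)
    show "a ` (UNIV - {..<n}) \<noteq> {}" by auto
  next
    fix w assume "w \<in> a ` (UNIV - {..<n})"
    then obtain x where x: "x \<in> UNIV - {..<n}" "w = a x" by blast
    then have "x \<ge> n" by simp
    then show "w \<le> a n" using dec x(2) by (simp add: decseq_def)
  qed
  finally show ?thesis .
qed

lemma card_div_fiber: "k > 0 \<Longrightarrow> finite {n::nat. n div k = y} \<and> card {n::nat. n div k = y} \<le> k"
proof -
  assume k: "k > 0"
  have sub: "{n::nat. n div k = y} \<subseteq> {y*k..<y*k+k}"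
  proof
    fix n assume "n \<in> {n::nat. n div k = y}"
    then have "n div k = y" by simp
    then have "n = y * k + n mod k" using div_mult_mod_eq[of n k] by simp
    moreover have "n mod k < k" using k by simp
    ultimately show "n \<in> {y*k..<y*k+k}" by (simp only: atLeastLessThan_iff) linarith
  qed
  have "card {n::nat. n div k = y} \<le> card {y*k..<y*k+k}" by (rule card_mono[OF finite_atLeastLessThan sub])
  then have "card {n::nat. n div k = y} \<le> k" by simp
  moreover have "finite {n::nat. n div k = y}" by (rule finite_subset[OF sub finite_atLeastLessThan])
  ultimately show ?thesis by blast
qed

lemma domin_div:
  fixes f :: "nat \<Rightarrow> real"
  assumes "c > 0" "k > 0" "\<And>n. f n \<le> c * g (n div k)"
  shows "domin f g c k (\<lambda>n. n div k)"
proof -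
  have "finite {x. x div k = y \<and> f x \<noteq> 0} \<and> card {x. x div k = y \<and> f x \<noteq> 0} \<le> k" for y
  proof -
    have s: "{x. x div k = y \<and> f x \<noteq> 0} \<subseteq> {n. n div k = y}" by blast
    have f1: "finite {n. n div k = y}" and c1: "card {n. n div k = y} \<le> k" using card_div_fiber[OF assms(2), of y] by blast+
    have "finite {x. x div k = y \<and> f x \<noteq> 0}" by (rule finite_subset[OF s f1])
    moreover have "card {x. x div k = y \<and> f x \<noteq> 0} \<le> k" using card_mono[OF f1 s] c1 by linarith
    ultimately show ?thesis by blast
  qed
  then show ?thesis unfolding domin_def using assms by blast
qed

lemma fiber_split:
  fixes f :: "nat \<Rightarrow> real"
  assumes d: "domin f g c k \<phi>"
  defines "r \<equiv> \<lambda>m. card {m'\<in>{x. \<phi> x = \<phi> m \<and> f x \<noteq> 0}. m' < m}"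
  shows "\<And>m. f m \<noteq> 0 \<Longrightarrow> r m < k"
    and "\<And>\<rho> y. finite {x. \<phi> x = y \<and> (if r x = \<rho> then f x else 0) \<noteq> 0}
             \<and> card {x. \<phi> x = y \<and> (if r x = \<rho> then f x else 0) \<noteq> 0} \<le> 1"
proof -
  from d have fin: "\<And>y. finite {x. \<phi> x = y \<and> f x \<noteq> 0}" and cd: "\<And>y. card {x. \<phi> x = y \<and> f x \<noteq> 0} \<le> k"
    unfolding domin_def by auto
  have injid: "inj_on (\<lambda>x::nat. x) A" for A by (rule inj_on_id[unfolded id_def])
  {
    fix m assume "f m \<noteq> 0"
    then have mm: "m \<in> {x. \<phi> x = \<phi> m \<and> f x \<noteq> 0}" by simp
    have "r m < card {x. \<phi> x = \<phi> m \<and> f x \<noteq> 0}"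
      unfolding r_def by (rule rank_props(1)[OF fin[of "\<phi> m"] injid mm])
    with cd[of "\<phi> m"] show "r m < k" by linarith
  }
  fix \<rho> y
  have inj: "inj_on r {x. \<phi> x = y \<and> f x \<noteq> 0}"
  proof -
    have i1: "inj_on (\<lambda>p. card {q\<in>{x. \<phi> x = y \<and> f x \<noteq> 0}. q < p}) {x. \<phi> x = y \<and> f x \<noteq> 0}"
      by (rule rank_props(2)[OF fin[of y] injid])
    have req: "r p = card {q\<in>{x. \<phi> x = y \<and> f x \<noteq> 0}. q < p}" if "p \<in> {x. \<phi> x = y \<and> f x \<noteq> 0}" for p
    proof -
      from that have "\<phi> p = y" by simp
      then show ?thesis unfolding r_def by simp
    qed
    show ?thesis
    proof (rule inj_onI)
      fix p q assume pq: "p \<in> {x. \<phi> x = y \<and> f x \<noteq> 0}" "q \<in> {x. \<phi> x = y \<and> f x \<noteq> 0}" "r p = r q"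
      then have "card {q'\<in>{x. \<phi> x = y \<and> f x \<noteq> 0}. q' < p} = card {q'\<in>{x. \<phi> x = y \<and> f x \<noteq> 0}. q' < q}"
        using req[OF pq(1)] req[OF pq(2)] by simp
      then show "p = q" using inj_onD[OF i1 _ pq(1) pq(2)] by simp
    qed
  qed
  have s: "{x. \<phi> x = y \<and> (if r x = \<rho> then f x else 0) \<noteq> 0} = {x. r x = \<rho> \<and> x \<in> {x. \<phi> x = y \<and> f x \<noteq> 0}}"
  proof (rule Collect_cong)
    fix x show "(\<phi> x = y \<and> (if r x = \<rho> then f x else 0) \<noteq> 0) = (r x = \<rho> \<and> x \<in> {x. \<phi> x = y \<and> f x \<noteq> 0})"
      by (cases "r x = \<rho>") simp_all
  qed
  show "finite {x. \<phi> x = y \<and> (if r x = \<rho> then f x else 0) \<noteq> 0}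
             \<and> card {x. \<phi> x = y \<and> (if r x = \<rho> then f x else 0) \<noteq> 0} \<le> 1"
    unfolding s by (rule card_le1_inj[OF inj])
qed




definition Msp :: "(nat \<Rightarrow> real) \<Rightarrow> (nat \<Rightarrow> complex) set" where
  "Msp a = {\<beta>. \<beta> \<in> c0 \<and> (\<exists>c k \<phi>. domin (\<lambda>m. norm (\<beta> m)) a c k \<phi>)}"

lemma domin_le:
  assumes "\<And>x. g x \<le> h x"
  shows "domin g h 1 1 (\<lambda>x. x)"
proof -
  have "finite {x. x = y \<and> g x \<noteq> 0} \<and> card {x. x = y \<and> g x \<noteq> 0} \<le> 1" for y
  proof -
    have s: "{x. x = y \<and> g x \<noteq> 0} \<subseteq> {y}" by blast
    show ?thesis using finite_subset[OF s] card_mono[OF _ s] by simp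
  qed
  then show ?thesis unfolding domin_def using assms by simp
qed

lemma c0_norm_le:
  assumes "\<beta> \<in> c0" "\<And>m. norm (\<gamma> m) \<le> norm (\<beta> m)"
  shows "\<gamma> \<in> c0"
proof -
  have "(\<lambda>m. norm (\<beta> m)) \<longlonglongrightarrow> 0" using assms(1) unfolding c0_def by (simp add: tendsto_norm_zero)
  then have "\<gamma> \<longlonglongrightarrow> 0" by (rule Lim_null_comparison[rotated]) (use assms(2) in auto)
  then show ?thesis unfolding c0_def by simp
qed

lemma c0_null: "\<beta> \<in> c0 \<Longrightarrow> (\<lambda>m. norm (\<beta> m)) \<longlonglongrightarrow> 0"
  unfolding c0_def by (simp add: tendsto_norm_zero)

context
  fixes a :: "nat \<Rightarrow> real"
  assumes a0: "\<And>m. a m \<ge> 0" and dec: "decseq a" and alim: "a \<longlonglongrightarrow> 0"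
begin

lemma abdd: "bdd_above (range a)" by (rule null_bdd[OF alim])

lemma M_dom:
  assumes \<gamma>: "\<gamma> \<in> Msp a" and \<beta>: "\<beta> \<in> c0" and le: "\<And>n. dstar \<beta> n \<le> dstar \<gamma> n"
  shows "\<beta> \<in> Msp a"
proof -
  obtain c k \<phi> where d: "domin (\<lambda>m. norm (\<gamma> m)) a c k \<phi>" using \<gamma> unfolding Msp_def by auto
  have ck: "c > 0" "k > 0" using d unfolding domin_def by auto
  let ?f = "\<lambda>m. norm (\<beta> m)" and ?h = "\<lambda>m. norm (\<gamma> m)"
  have hl: "?h \<longlonglongrightarrow> 0" using \<gamma> c0_null unfolding Msp_def by auto
  have fl: "?f \<longlonglongrightarrow> 0" using \<beta> c0_null by auto
  have d1: "domin ?f (rearr ?f) 1 1 (\<lambda>m. card {m'. ?f m' > ?f m} + card {m'. m' < m \<and> ?f m' = ?f m})"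
    by (rule rearr_sigma) (use fl in auto)
  have d2: "domin (rearr ?f) (rearr ?h) 1 1 (\<lambda>x. x)"
    by (rule domin_le) (use le in \<open>simp add: dstar_def\<close>)
  have r1: "rearr ?h n \<le> c * rearr a (n div k)" for n
    by (rule rearr_domin[OF infinite_UNIV_nat infinite_UNIV_nat _ a0 abdd d]) simp
  have r2: "rearr ?h n \<le> c * a (n div k)" for n
    using r1[of n] rearr_dec_le[OF a0 dec, of "n div k"] ck(1) by (meson mult_left_mono less_imp_le order_trans)
  have d3: "domin (rearr ?h) a c k (\<lambda>n. n div k)" by (rule domin_div[where f="rearr ?h" and g=a]) (use ck r2 in auto)
  have f0: "rearr ?f n \<ge> 0" for n by (rule rearr_nonneg[OF infinite_UNIV_nat]) (use null_bdd[OF fl] in auto)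
  have h0: "rearr ?h n \<ge> 0" for n by (rule rearr_nonneg[OF infinite_UNIV_nat]) (use null_bdd[OF hl] in auto)
  note d12 = domin_comp[OF d1 d2 norm_ge_zero f0]
  note d123 = domin_comp[OF d12 d3 norm_ge_zero h0]
  then show ?thesis using \<beta> unfolding Msp_def by blast
qed

lemma M_zero: "(\<lambda>_. 0) \<in> Msp a"
proof -
  have "domin (\<lambda>m. norm ((\<lambda>_. 0::complex) m)) a 1 1 (\<lambda>x. x)" by (rule domin_le) (simp add: a0)
  then show ?thesis unfolding Msp_def c0_def by auto
qed

lemma M_scal:
  assumes "x \<in> Msp a" shows "(\<lambda>n. s * x n) \<in> Msp a"
proof -
  obtain c k \<phi> where d: "domin (\<lambda>m. norm (x m)) a c k \<phi>" and x0: "x \<in> c0" using assms unfolding Msp_def by auto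
  have x0': "x \<longlonglongrightarrow> 0" using x0 by (simp add: c0_def)
  have "(\<lambda>n. s * x n) \<longlonglongrightarrow> 0" using tendsto_mult[OF tendsto_const[of s] x0'] by simp
  then have c0': "(\<lambda>n. s * x n) \<in> c0" unfolding c0_def by simp
  from d have c: "c > 0" "k > 0" and le: "\<And>m. norm (x m) \<le> c * a (\<phi> m)"
    and fin: "\<And>y. finite {m. \<phi> m = y \<and> norm (x m) \<noteq> 0}" and cd: "\<And>y. card {m. \<phi> m = y \<and> norm (x m) \<noteq> 0} \<le> k"
    unfolding domin_def by auto
  have le': "norm (s * x m) \<le> (c * (norm s + 1)) * a (\<phi> m)" for m
  proof -
    have "norm (s * x m) = norm s * norm (x m)" by (simp add: norm_mult)
    also have "\<dots> \<le> (norm s + 1) * (c * a (\<phi> m))" using le[of m] by (intro mult_mono) auto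
    finally show ?thesis by (simp add: algebra_simps)
  qed
  have sub: "{m. \<phi> m = y \<and> norm (s * x m) \<noteq> 0} \<subseteq> {m. \<phi> m = y \<and> norm (x m) \<noteq> 0}" for y by auto
  have "domin (\<lambda>m. norm (s * x m)) a (c * (norm s + 1)) k \<phi>"
    unfolding domin_def
  proof (intro conjI allI)
    show "c * (norm s + 1) > 0" using c by (simp add: add_nonneg_pos)
    show "k > 0" by (rule c)
    fix m show "norm (s * x m) \<le> c * (norm s + 1) * a (\<phi> m)" by (rule le')
  next
    fix y show "finite {m. \<phi> m = y \<and> norm (s * x m) \<noteq> 0}" by (rule finite_subset[OF sub fin])
  next
    fix y show "card {m. \<phi> m = y \<and> norm (s * x m) \<noteq> 0} \<le> k" using card_mono[OF fin sub, of y] cd[of y] by linarith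
  qed
  then show ?thesis using c0' unfolding Msp_def by blast
qed

lemma M_add:
  assumes "x \<in> Msp a" "y \<in> Msp a" shows "(\<lambda>n. x n + y n) \<in> Msp a"
proof -
  obtain c1 k1 \<phi>1 where d1: "domin (\<lambda>m. norm (x m)) a c1 k1 \<phi>1" and x0: "x \<in> c0" using assms unfolding Msp_def by auto
  obtain c2 k2 \<phi>2 where d2: "domin (\<lambda>m. norm (y m)) a c2 k2 \<phi>2" and y0: "y \<in> c0" using assms unfolding Msp_def by auto
  have c0': "(\<lambda>n. x n + y n) \<in> c0" using x0 y0 unfolding c0_def using tendsto_add by fastforce
  from d1 have c1: "c1 > 0" "k1 > 0" and le1: "\<And>m. norm (x m) \<le> c1 * a (\<phi>1 m)"
    and fin1: "\<And>z. finite {m. \<phi>1 m = z \<and> norm (x m) \<noteq> 0}" and cd1: "\<And>z. card {m. \<phi>1 m = z \<and> norm (x m) \<noteq> 0} \<le> k1"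
    unfolding domin_def by auto
  from d2 have c2: "c2 > 0" "k2 > 0" and le2: "\<And>m. norm (y m) \<le> c2 * a (\<phi>2 m)"
    and fin2: "\<And>z. finite {m. \<phi>2 m = z \<and> norm (y m) \<noteq> 0}" and cd2: "\<And>z. card {m. \<phi>2 m = z \<and> norm (y m) \<noteq> 0} \<le> k2"
    unfolding domin_def by auto
  define \<psi> where "\<psi> m = (if x m = 0 then \<phi>2 m else if y m = 0 then \<phi>1 m else min (\<phi>1 m) (\<phi>2 m))" for m
  have le: "norm (x m + y m) \<le> (c1 + c2) * a (\<psi> m)" for m
  proof -
    have A: "a (min (\<phi>1 m) (\<phi>2 m)) \<ge> a (\<phi>1 m)" "a (min (\<phi>1 m) (\<phi>2 m)) \<ge> a (\<phi>2 m)"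
      using dec by (auto simp: decseq_def)
    have "norm (x m + y m) \<le> norm (x m) + norm (y m)" by (rule norm_triangle_ineq)
    moreover have "c1 * a (\<phi>1 m) \<le> c1 * a (min (\<phi>1 m) (\<phi>2 m))" using A c1 by simp
    moreover have "c2 * a (\<phi>2 m) \<le> c2 * a (min (\<phi>1 m) (\<phi>2 m))" using A c2 by simp
    moreover have "c2 * a (\<phi>2 m) \<ge> 0" "c1 * a (\<phi>1 m) \<ge> 0" using a0 c1 c2 by simp_all
    moreover have "c2 * a (\<phi>1 m) \<ge> 0" "c1 * a (\<phi>2 m) \<ge> 0" using a0 c1 c2 by simp_all
    moreover note le1[of m] le2[of m]
    ultimately show ?thesis unfolding \<psi>_def by (simp add: algebra_simps split: if_splits; linarith)
  qed
  have sub: "{m. \<psi> m = z \<and> norm (x m + y m) \<noteq> 0} \<subseteq> {m. \<phi>1 m = z \<and> norm (x m) \<noteq> 0} \<union> {m. \<phi>2 m = z \<and> norm (y m) \<noteq> 0}" for z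
    unfolding \<psi>_def by (auto simp: min_def split: if_splits)
  have fin: "finite {m. \<psi> m = z \<and> norm (x m + y m) \<noteq> 0}" for z
    using finite_subset[OF sub] fin1 fin2 by blast
  have cd: "card {m. \<psi> m = z \<and> norm (x m + y m) \<noteq> 0} \<le> k1 + k2" for z
  proof -
    have "card {m. \<psi> m = z \<and> norm (x m + y m) \<noteq> 0} \<le> card ({m. \<phi>1 m = z \<and> norm (x m) \<noteq> 0} \<union> {m. \<phi>2 m = z \<and> norm (y m) \<noteq> 0})"
      by (rule card_mono[OF _ sub]) (use fin1 fin2 in auto)
    also have "\<dots> \<le> card {m. \<phi>1 m = z \<and> norm (x m) \<noteq> 0} + card {m. \<phi>2 m = z \<and> norm (y m) \<noteq> 0}" by (rule card_Un_le)
    finally show ?thesis using cd1[of z] cd2[of z] by linarith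
  qed
  have "domin (\<lambda>m. norm (x m + y m)) a (c1 + c2) (k1 + k2) \<psi>"
    unfolding domin_def using c1 c2 le fin cd by auto
  then show ?thesis using c0' unfolding Msp_def by blast
qed

lemma M_calkin: "calkin (Msp a)"
  unfolding calkin_def using M_zero M_add M_scal M_dom by (auto simp: Msp_def)

lemma alpha_in_M: "(\<lambda>n. complex_of_real (a n)) \<in> Msp a"
proof -
  have "domin (\<lambda>m. norm (complex_of_real (a m))) a 1 1 (\<lambda>x. x)" by (rule domin_le) (simp add: a0)
  moreover have "(\<lambda>n. complex_of_real (a n)) \<in> c0" unfolding c0_def using tendsto_of_real[OF alim] by simp
  ultimately show ?thesis unfolding Msp_def by blast
qed

lemma calkin_sum:
  fixes k :: nat
  assumes "calkin I" "\<And>\<rho>. \<rho> < k \<Longrightarrow> x \<rho> \<in> I"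
  shows "(\<lambda>m. \<Sum>\<rho><k. x \<rho> m) \<in> I"
  using assms(2)
proof (induction k)
  case 0 then show ?case using assms(1) unfolding calkin_def by simp
next
  case (Suc k)
  have "(\<lambda>m. \<Sum>\<rho><k. x \<rho> m) \<in> I" using Suc by simp
  moreover have "x k \<in> I" using Suc by simp
  ultimately have "(\<lambda>m. (\<Sum>\<rho><k. x \<rho> m) + x k m) \<in> I" using assms(1) unfolding calkin_def by blast
  then show ?case by simp
qed

lemma M_sub:
  assumes I: "calkin I" and aI: "(\<lambda>n. complex_of_real (a n)) \<in> I"
  shows "Msp a \<subseteq> I"
proof
  fix \<beta> assume \<beta>: "\<beta> \<in> Msp a"
  obtain c k \<phi> where d: "domin (\<lambda>m. norm (\<beta> m)) a c k \<phi>" and b0: "\<beta> \<in> c0" using \<beta> unfolding Msp_def by auto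
  from d have c: "c > 0" "k > 0" and le: "\<And>m. norm (\<beta> m) \<le> c * a (\<phi> m)" unfolding domin_def by auto
  define r where "r = (\<lambda>m. card {m'\<in>{x. \<phi> x = \<phi> m \<and> norm (\<beta> x) \<noteq> 0}. m' < m})"
  have rk: "\<And>m. norm (\<beta> m) \<noteq> 0 \<Longrightarrow> r m < k" using fiber_split(1)[OF d] unfolding r_def by blast
  have rc: "finite {x. \<phi> x = y \<and> (if r x = \<rho> then norm (\<beta> x) else 0) \<noteq> 0}
             \<and> card {x. \<phi> x = y \<and> (if r x = \<rho> then norm (\<beta> x) else 0) \<noteq> 0} \<le> 1" for \<rho> y
    using fiber_split(2)[OF d] unfolding r_def by blast
  define ca where "ca = (\<lambda>n. complex_of_real c * complex_of_real (a n))"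
  have caI: "ca \<in> I" using I aI unfolding calkin_def ca_def by blast
  have nca: "norm (ca n) = c * a n" for n unfolding ca_def using c a0[of n] by (simp add: norm_mult)
  define bp where "bp = (\<lambda>\<rho> m. if r m = \<rho> then \<beta> m else 0)"
  have bpI: "bp \<rho> \<in> I" for \<rho>
  proof -
    have nb: "(\<lambda>m. norm (bp \<rho> m)) = (\<lambda>m. if r m = \<rho> then norm (\<beta> m) else 0)" unfolding bp_def by auto
    have dd: "domin (\<lambda>m. norm (bp \<rho> m)) (\<lambda>m. norm (ca m)) 1 1 \<phi>"
      unfolding domin_def nb nca
    proof (intro conjI allI zero_less_one)
      fix x show "(if r x = \<rho> then norm (\<beta> x) else 0) \<le> 1 * (c * a (\<phi> x))"
        using le[of x] c a0[of "\<phi> x"] by simp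
    next
      fix y show "finite {x. \<phi> x = y \<and> (if r x = \<rho> then norm (\<beta> x) else 0) \<noteq> 0}" using rc[of y \<rho>] by blast
    next
      fix y show "card {x. \<phi> x = y \<and> (if r x = \<rho> then norm (\<beta> x) else 0) \<noteq> 0} \<le> 1" using rc[of y \<rho>] by blast
    qed
    have bp0: "bp \<rho> \<in> c0" by (rule c0_norm_le[OF b0]) (simp add: bp_def)
    have cal: "rearr (\<lambda>m. norm (ca m)) \<in> UNIV" by simp
    have "rearr (\<lambda>m. norm (bp \<rho> m)) n \<le> 1 * rearr (\<lambda>m. norm (ca m)) (n div 1)" for n
    proof (rule rearr_domin[OF infinite_UNIV_nat infinite_UNIV_nat _ _ _ dd])
      show "bdd_above (range (\<lambda>m. norm (ca m)))" unfolding nca using abdd c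
        by (auto simp: bdd_above_def intro!: exI[of _ "c * Sup (range a)"] mult_left_mono cSUP_upper)
    qed (auto simp: nca a0 c(1) less_imp_le)
    then have "dstar (bp \<rho>) n \<le> dstar ca n" for n unfolding dstar_def by simp
    then show ?thesis using I caI bp0 unfolding calkin_def by blast
  qed
  have "(\<lambda>m. \<Sum>\<rho><k. bp \<rho> m) \<in> I" by (rule calkin_sum[OF I bpI])
  moreover have "(\<lambda>m. \<Sum>\<rho><k. bp \<rho> m) = \<beta>"
  proof
    fix m
    have "(\<Sum>\<rho><k. bp \<rho> m) = (if r m \<in> {..<k} then \<beta> m else 0)" unfolding bp_def by (rule sum.delta'[OF finite_lessThan])
    then show "(\<Sum>\<rho><k. bp \<rho> m) = \<beta> m" using rk[of m] by auto
  qed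
  ultimately show "\<beta> \<in> I" by simp
qed

lemma hull_eq: "calkin_hull {(\<lambda>n. complex_of_real (a n))} = Msp a"
proof
  show "calkin_hull {(\<lambda>n. complex_of_real (a n))} \<subseteq> Msp a"
    unfolding calkin_hull_def using M_calkin alpha_in_M by blast
  show "Msp a \<subseteq> calkin_hull {(\<lambda>n. complex_of_real (a n))}"
    unfolding calkin_hull_def using M_sub by blast
qed

end



context
  fixes a :: "nat \<Rightarrow> real" and \<omega> C :: real
  assumes a0: "\<And>m. a m \<ge> 0" and dec: "decseq a" and alim: "a \<longlonglongrightarrow> 0" and a1: "a 0 \<le> 1"
    and w0: "0 < \<omega>" and w1: "\<omega> < 1" and C0: "C > 0"
    and hyp: "\<And>n j. j \<ge> 1 \<Longrightarrow> real (Kw \<omega> a (n + j)) \<ge> C * (\<Sum>i\<le>n. real (Kw \<omega> a i)) ^ 2"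
begin

definition Lf :: "real \<Rightarrow> nat" where "Lf x = (LEAST m. a m \<le> x)"

lemma G_eq: assumes "x > 0" shows "{m. a m > x} = {..<Lf x}"
proof -
  have "eventually (\<lambda>m. a m < x) sequentially" using order_tendstoD(2)[OF alim assms] .
  then obtain N where "a N < x" by (auto simp: eventually_sequentially)
  then have ex: "\<exists>m. a m \<le> x" by (auto intro: less_imp_le)
  have L: "a (Lf x) \<le> x" unfolding Lf_def by (rule LeastI_ex[OF ex])
  show ?thesis
  proof (intro set_eqI iffI)
    fix m assume "m \<in> {m. a m > x}"
    then have "\<not> a m \<le> x" by simp
    then have "\<not> m \<ge> Lf x" using L dec by (auto simp: decseq_def intro: order_trans)
    then show "m \<in> {..<Lf x}" by simp
  next
    fix m assume "m \<in> {..<Lf x}"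
    then have "\<not> a m \<le> x" unfolding Lf_def using not_less_Least by auto
    then show "m \<in> {m. a m > x}" by simp
  qed
qed

lemma Lf_mono: assumes "0 < x" "x \<le> y" shows "Lf y \<le> Lf x"
proof -
  have "{m. a m > y} \<subseteq> {m. a m > x}" using assms by auto
  then have "{..<Lf y} \<subseteq> {..<Lf x}" using G_eq[of x] G_eq[of y] assms by simp
  then show ?thesis by simp
qed

lemma wpos: "\<omega> ^ n > 0" using w0 by simp

lemma Lf_pow_mono: "n \<le> m \<Longrightarrow> Lf (\<omega> ^ n) \<le> Lf (\<omega> ^ m)"
  by (rule Lf_mono[OF wpos]) (use w0 w1 in simp)

lemma Kw_eq: "Kw \<omega> a n = Lf (\<omega> ^ (n+1)) - Lf (\<omega> ^ n)"
proof -
  have "{m. \<omega> ^ (n + 1) < a m \<and> a m \<le> \<omega> ^ n} = {m. a m > \<omega> ^ (n+1)} - {m. a m > \<omega> ^ n}" by auto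
  also have "\<dots> = {..<Lf (\<omega> ^ (n+1))} - {..<Lf (\<omega> ^ n)}" using G_eq[OF wpos, of "n+1"] G_eq[OF wpos, of n] by (simp only:)
  also have "\<dots> = {Lf (\<omega> ^ n)..<Lf (\<omega> ^ (n+1))}" by auto
  finally show ?thesis unfolding Kw_def by simp
qed

lemma Lf_1: "Lf 1 = 0" unfolding Lf_def using a1 by simp

lemma Kw_sum: "(\<Sum>i\<le>n. Kw \<omega> a i) = Lf (\<omega> ^ (n+1))"
proof (induction n)
  case 0 then show ?case using Kw_eq[of 0] Lf_1 by simp
next
  case (Suc n)
  have "Lf (\<omega> ^ (n+1)) \<le> Lf (\<omega> ^ (Suc n + 1))" by (rule Lf_pow_mono) simp
  then show ?case using Suc Kw_eq[of "Suc n"] by simp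
qed

definition bd :: "nat \<Rightarrow> nat" where "bd u = (LEAST i. \<omega> ^ (i+1) < a u)"

lemma bd_props: assumes "a u > 0" shows "\<omega> ^ (bd u + 1) < a u" "a u \<le> \<omega> ^ bd u"
proof -
  obtain n where n: "\<omega> ^ n < a u" using real_arch_pow_inv[OF assms w1] by blast
  have "\<omega> ^ (n+1) \<le> \<omega> ^ n" using w0 w1 by simp
  then have ex: "\<exists>i. \<omega> ^ (i+1) < a u" using n by (intro exI[of _ n]) linarith
  show "\<omega> ^ (bd u + 1) < a u" unfolding bd_def by (rule LeastI_ex[OF ex])
  show "a u \<le> \<omega> ^ bd u"
  proof (cases "bd u")
    case 0 then show ?thesis using a1 dec by (simp add: decseq_def) (meson order_trans zero_le)
  next
    case (Suc j)
    then have "\<not> \<omega> ^ (j+1) < a u" using not_less_Least[of j "\<lambda>i. \<omega> ^ (i+1) < a u"] unfolding bd_def by simp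
    then show ?thesis using Suc by simp
  qed
qed

definition Pairs :: "nat \<Rightarrow> (nat \<times> nat) set" where
  "Pairs s = {p. a (fst p) > 0 \<and> a (snd p) > 0 \<and> bd (fst p) + bd (snd p) = s}"

lemma Pairs_sub: "Pairs s \<subseteq> {..<Lf (\<omega> ^ (s+1))} \<times> {..<Lf (\<omega> ^ (s+1))}"
proof
  fix p assume p: "p \<in> Pairs s"
  have inG: "u \<in> {..<Lf (\<omega> ^ (s+1))}" if "a u > 0" "bd u \<le> s" for u
  proof -
    have "\<omega> ^ (s+1) \<le> \<omega> ^ (bd u + 1)" using that(2) w0 w1 by simp
    then have "a u > \<omega> ^ (s+1)" using bd_props(1)[OF that(1)] by linarith
    then show ?thesis using G_eq[OF wpos, of "s+1"] by auto
  qed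
  show "p \<in> {..<Lf (\<omega> ^ (s+1))} \<times> {..<Lf (\<omega> ^ (s+1))}"
    using p inG[of "fst p"] inG[of "snd p"] unfolding Pairs_def by (cases p) auto
qed

lemma Pairs_fin: "finite (Pairs s)"
  by (rule finite_subset[OF Pairs_sub]) simp

definition KK :: nat where "KK = nat \<lceil>1 / C\<rceil>"

lemma KK_props: "KK > 0" "real KK * C \<ge> 1"
proof -
  have "1 / C > 0" using C0 by simp
  then have "\<lceil>1 / C\<rceil> > 0" by simp
  then show "KK > 0" unfolding KK_def by simp
  have "real KK \<ge> 1 / C" unfolding KK_def using \<open>\<lceil>1 / C\<rceil> > 0\<close> by (simp add: le_of_int_ceiling)
  then show "real KK * C \<ge> 1" using C0 by (simp add: field_simps)
qed

lemma Pairs_card: "card (Pairs s) < KK * Kw \<omega> a (s+1) + 1"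
proof -
  let ?L = "Lf (\<omega> ^ (s+1))"
  have "card (Pairs s) \<le> card ({..<?L} \<times> {..<?L})" by (rule card_mono[OF _ Pairs_sub]) simp
  also have "\<dots> = ?L ^ 2" by (simp add: power2_eq_square)
  finally have c1n: "card (Pairs s) \<le> ?L ^ 2" .
  have c1: "real (card (Pairs s)) \<le> real ?L ^ 2" using c1n by (metis of_nat_le_iff of_nat_power)
  have "real (Kw \<omega> a (s + 1)) \<ge> C * (\<Sum>i\<le>s. real (Kw \<omega> a i)) ^ 2" by (rule hyp) simp
  moreover have "(\<Sum>i\<le>s. real (Kw \<omega> a i)) = real ?L" using Kw_sum[of s] by (metis of_nat_sum)
  ultimately have h: "real (Kw \<omega> a (s + 1)) \<ge> C * real ?L ^ 2" by simp
  have "real ?L ^ 2 \<le> real KK * C * real ?L ^ 2" using KK_props(2) by (simp add: mult_le_cancel_right1)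
  also have "\<dots> \<le> real KK * real (Kw \<omega> a (s + 1))" using h by (simp add: mult.assoc mult_left_mono)
  finally have "real ?L ^ 2 \<le> real KK * real (Kw \<omega> a (s + 1))" .
  then have "real (card (Pairs s)) \<le> real KK * real (Kw \<omega> a (s + 1))" using c1 by linarith
  then have "card (Pairs s) \<le> KK * Kw \<omega> a (s + 1)" by (metis of_nat_le_iff of_nat_mult)
  then show ?thesis by linarith
qed

definition sp :: "nat \<times> nat \<Rightarrow> nat" where "sp p = bd (fst p) + bd (snd p)"

definition rk :: "nat \<times> nat \<Rightarrow> nat" where
  "rk p = card {q \<in> Pairs (sp p). prod_encode q < prod_encode p}"

definition chi :: "nat \<times> nat \<Rightarrow> nat" where
  "chi p = (if a (fst p) > 0 \<and> a (snd p) > 0 then Lf (\<omega> ^ (sp p + 1)) + rk p div KK else 0)"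

lemma in_Pairs: "a (fst p) > 0 \<Longrightarrow> a (snd p) > 0 \<Longrightarrow> p \<in> Pairs (sp p)"
  unfolding Pairs_def sp_def by simp

lemma chi_range:
  assumes "a (fst p) > 0" "a (snd p) > 0"
  shows "Lf (\<omega> ^ (sp p + 1)) \<le> chi p" "chi p < Lf (\<omega> ^ (sp p + 2))"
proof -
  show "Lf (\<omega> ^ (sp p + 1)) \<le> chi p" unfolding chi_def using assms by simp
  have "rk p < card (Pairs (sp p))" unfolding rk_def
    by (rule rank_props(1)[OF Pairs_fin inj_prod_encode in_Pairs[OF assms]])
  then have "rk p < KK * Kw \<omega> a (sp p + 1)" using Pairs_card[of "sp p"] by linarith
  then have "rk p div KK < Kw \<omega> a (sp p + 1)" using KK_props(1) by (simp add: div_less_iff_less_mult mult.commute)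
  moreover have "Kw \<omega> a (sp p + 1) = Lf (\<omega> ^ (sp p + 2)) - Lf (\<omega> ^ (sp p + 1))" using Kw_eq[of "sp p + 1"] by simp
  moreover have "Lf (\<omega> ^ (sp p + 1)) \<le> Lf (\<omega> ^ (sp p + 2))" by (rule Lf_pow_mono) simp
  ultimately show "chi p < Lf (\<omega> ^ (sp p + 2))" unfolding chi_def using assms by simp
qed

lemma chi_bound: "a (fst p) * a (snd p) \<le> (1 / \<omega>^2) * a (chi p)"
proof (cases "a (fst p) > 0 \<and> a (snd p) > 0")
  case False
  then have z: "a (fst p) * a (snd p) = 0" using a0[of "fst p"] a0[of "snd p"] by auto
  have "0 \<le> (1/\<omega>^2) * a (chi p)" using a0[of "chi p"] w0 by simp
  with z show ?thesis by linarith
next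
  case True
  have "chi p \<in> {..<Lf (\<omega> ^ (sp p + 2))}" using chi_range(2) True by simp
  then have big: "a (chi p) > \<omega> ^ (sp p + 2)" using G_eq[OF wpos, of "sp p + 2"] by auto
  have "a (fst p) * a (snd p) \<le> \<omega> ^ bd (fst p) * \<omega> ^ bd (snd p)"
    using bd_props(2) True a0 wpos by (intro mult_mono) (auto intro: less_imp_le)
  also have "\<dots> = \<omega> ^ sp p" unfolding sp_def by (simp add: power_add)
  also have "\<dots> = (1 / \<omega>^2) * \<omega> ^ (sp p + 2)" using w0 by (simp add: power_add field_simps power2_eq_square)
  also have "\<dots> \<le> (1 / \<omega>^2) * a (chi p)" using big w0 by (intro mult_left_mono) auto
  finally show ?thesis .
qed

lemma chi_fiber:
  "finite {p. chi p = t \<and> a (fst p) * a (snd p) \<noteq> 0} \<and> card {p. chi p = t \<and> a (fst p) * a (snd p) \<noteq> 0} \<le> KK"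
proof (cases "{p. chi p = t \<and> a (fst p) * a (snd p) \<noteq> 0} = {}")
  case True show ?thesis unfolding True by simp
next
  case False
  let ?P = "{p. chi p = t \<and> a (fst p) * a (snd p) \<noteq> 0}"
  have pos: "a (fst p) > 0 \<and> a (snd p) > 0" if "p \<in> ?P" for p
    using that a0[of "fst p"] a0[of "snd p"] by (auto simp: less_le)
  obtain p0 where p0: "p0 \<in> ?P" using False by blast
  define s0 where "s0 = sp p0"
  have same: "sp p = s0" if "p \<in> ?P" for p
  proof (rule ccontr)
    assume ne: "sp p \<noteq> s0"
    have r1: "Lf (\<omega> ^ (sp p + 1)) \<le> t" "t < Lf (\<omega> ^ (sp p + 2))"
      using chi_range[of p] pos[OF that] that by auto
    have r2: "Lf (\<omega> ^ (s0 + 1)) \<le> t" "t < Lf (\<omega> ^ (s0 + 2))"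
      using chi_range[of p0] pos[OF p0] p0 unfolding s0_def by auto
    show False
    proof (cases "sp p < s0")
      case True
      then have "Lf (\<omega> ^ (sp p + 2)) \<le> Lf (\<omega> ^ (s0 + 1))" by (intro Lf_pow_mono) simp
      then show False using r1 r2 by linarith
    next
      case False
      then have "s0 < sp p" using ne by simp
      then have "Lf (\<omega> ^ (s0 + 2)) \<le> Lf (\<omega> ^ (sp p + 1))" by (intro Lf_pow_mono) simp
      then show False using r1 r2 by linarith
    qed
  qed
  define d where "d = t - Lf (\<omega> ^ (s0 + 1))"
  have sub: "?P \<subseteq> Pairs s0"
  proof
    fix p assume "p \<in> ?P"
    then show "p \<in> Pairs s0" using in_Pairs[of p] pos[of p] same[of p] by simp
  qed
  have rkd: "rk p \<in> {n. n div KK = d}" if "p \<in> ?P" for p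
  proof -
    have c: "chi p = Lf (\<omega> ^ (s0 + 1)) + rk p div KK" using pos[OF that] same[OF that] unfolding chi_def by simp
    have "chi p = t" using that by simp
    with c have "rk p div KK = d" unfolding d_def by simp
    then show ?thesis by simp
  qed
  have rkeq: "rk p = card {q \<in> Pairs s0. prod_encode q < prod_encode p}" if "p \<in> ?P" for p
    unfolding rk_def using same[OF that] by simp
  have inj0: "inj_on (\<lambda>p. card {q \<in> Pairs s0. prod_encode q < prod_encode p}) (Pairs s0)"
    by (rule rank_props(2)[OF Pairs_fin inj_prod_encode])
  have inj: "inj_on rk ?P"
  proof (rule inj_onI)
    fix p q assume pq: "p \<in> ?P" "q \<in> ?P" "rk p = rk q"
    have e: "card {q' \<in> Pairs s0. prod_encode q' < prod_encode p} = card {q' \<in> Pairs s0. prod_encode q' < prod_encode q}"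
      using pq(3) rkeq[OF pq(1)] rkeq[OF pq(2)] by simp
    have "p \<in> Pairs s0" "q \<in> Pairs s0" using pq(1,2) sub by blast+
    then show "p = q" using inj_onD[OF inj0 e] by blast
  qed
  have finP: "finite ?P" by (rule finite_subset[OF sub Pairs_fin])
  have "card ?P = card (rk ` ?P)" by (rule card_image[OF inj, symmetric])
  also have "\<dots> \<le> card {n. n div KK = d}"
    using card_div_fiber[OF KK_props(1), of d] rkd by (intro card_mono) auto
  also have "\<dots> \<le> KK" using card_div_fiber[OF KK_props(1), of d] by blast
  finally show ?thesis using finP by simp
qed

lemma Q_domin: "domin (\<lambda>p. a (fst p) * a (snd p)) a (1 / \<omega>^2) KK chi"
  unfolding domin_def using chi_bound chi_fiber KK_props(1) w0 by simp

end



context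
  fixes a :: "nat \<Rightarrow> real" and \<omega> C :: real
  assumes a0: "\<And>m. a m \<ge> 0" and dec: "decseq a" and alim: "a \<longlonglongrightarrow> 0" and a1: "a 0 \<le> 1"
    and w0: "0 < \<omega>" and w1: "\<omega> < 1" and C0: "C > 0"
    and hyp: "\<And>n j. j \<ge> 1 \<Longrightarrow> real (Kw \<omega> a (n + j)) \<ge> C * (\<Sum>i\<le>n. real (Kw \<omega> a i)) ^ 2"
begin

lemma inf_pair: "infinite (UNIV :: (nat \<times> nat) set)"
  by (simp add: finite_prod)

lemma a_le0: "a m \<le> a 0" using dec by (simp add: decseq_def)

lemma tensor_M:
  assumes \<beta>: "\<beta> \<in> Msp a" and \<gamma>: "\<gamma> \<in> Msp a"
  shows "tensor \<beta> \<gamma> \<in> Msp a"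
proof -
  obtain c1 k1 \<phi>1 where d1: "domin (\<lambda>m. norm (\<beta> m)) a c1 k1 \<phi>1" using \<beta> unfolding Msp_def by auto
  obtain c2 k2 \<phi>2 where d2: "domin (\<lambda>m. norm (\<gamma> m)) a c2 k2 \<phi>2" using \<gamma> unfolding Msp_def by auto
  from d1 have c1: "c1 > 0" "k1 > 0" and le1: "\<And>m. norm (\<beta> m) \<le> c1 * a (\<phi>1 m)"
    and fin1: "\<And>z. finite {m. \<phi>1 m = z \<and> norm (\<beta> m) \<noteq> 0}" and cd1: "\<And>z. card {m. \<phi>1 m = z \<and> norm (\<beta> m) \<noteq> 0} \<le> k1"
    unfolding domin_def by auto
  from d2 have c2: "c2 > 0" "k2 > 0" and le2: "\<And>m. norm (\<gamma> m) \<le> c2 * a (\<phi>2 m)"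
    and fin2: "\<And>z. finite {m. \<phi>2 m = z \<and> norm (\<gamma> m) \<noteq> 0}" and cd2: "\<And>z. card {m. \<phi>2 m = z \<and> norm (\<gamma> m) \<noteq> 0} \<le> k2"
    unfolding domin_def by auto
  define P where "P = (\<lambda>(i, j). norm (\<beta> i * \<gamma> j))"
  have Pv: "P p = norm (\<beta> (fst p)) * norm (\<gamma> (snd p))" for p unfolding P_def by (cases p) (simp add: norm_mult)
  have P0: "P p \<ge> 0" for p unfolding Pv by (intro mult_nonneg_nonneg norm_ge_zero)
  define Q where "Q = (\<lambda>p. a (fst p) * a (snd p))"
  have Q0: "Q p \<ge> 0" for p unfolding Q_def using a0 by simp
  define \<Phi> where "\<Phi> = (\<lambda>p::nat\<times>nat. (\<phi>1 (fst p), \<phi>2 (snd p)))"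
  have dP: "domin P Q (c1 * c2) (k1 * k2) \<Phi>"
    unfolding domin_def
  proof (intro conjI allI)
    show "c1 * c2 > 0" "k1 * k2 > 0" using c1 c2 by simp_all
  next
    fix p
    have "P p \<le> (c1 * a (\<phi>1 (fst p))) * (c2 * a (\<phi>2 (snd p)))"
      unfolding Pv using le1 le2 c1 a0 by (intro mult_mono) auto
    then show "P p \<le> c1 * c2 * Q (\<Phi> p)" unfolding Q_def \<Phi>_def by (simp add: algebra_simps)
  next
    fix y :: "nat \<times> nat"
    have sub: "{p. \<Phi> p = y \<and> P p \<noteq> 0} \<subseteq> {m. \<phi>1 m = fst y \<and> norm (\<beta> m) \<noteq> 0} \<times> {m. \<phi>2 m = snd y \<and> norm (\<gamma> m) \<noteq> 0}"
      unfolding \<Phi>_def Pv by auto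
    show "finite {p. \<Phi> p = y \<and> P p \<noteq> 0}" by (rule finite_subset[OF sub]) (use fin1 fin2 in auto)
    have "card {p. \<Phi> p = y \<and> P p \<noteq> 0} \<le> card ({m. \<phi>1 m = fst y \<and> norm (\<beta> m) \<noteq> 0} \<times> {m. \<phi>2 m = snd y \<and> norm (\<gamma> m) \<noteq> 0})"
      by (rule card_mono[OF _ sub]) (use fin1 fin2 in auto)
    also have "\<dots> \<le> k1 * k2" unfolding card_cartesian_product using cd1 cd2 by (simp add: mult_le_mono)
    finally show "card {p. \<Phi> p = y \<and> P p \<noteq> 0} \<le> k1 * k2" .
  qed
  have dQ: "domin Q a (1 / \<omega>^2) (KK C) (chi a \<omega> C)"
    unfolding Q_def by (rule Q_domin[OF a0 dec alim a1 w0 w1 C0 hyp])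
  note dPa = domin_comp[OF dP dQ P0 Q0]
  define c where "c = c1 * c2 * (1 / \<omega>^2)"
  define k where "k = k1 * k2 * KK C"
  have ck: "c > 0" "k > 0" using dPa unfolding c_def k_def domin_def by auto
  have dPa': "domin P a c k (\<lambda>x. chi a \<omega> C (\<Phi> x))" using dPa unfolding c_def k_def .
  have allP: "\<forall>x. P x \<le> c * a (chi a \<omega> C (\<Phi> x))" using dPa' unfolding domin_def by (rule conjunct1[OF conjunct2[OF conjunct2]])
  have Pbd: "bdd_above (range P)"
  proof (rule bdd_aboveI[of _ "c * a 0"])
    fix z assume "z \<in> range P" then obtain p where "z = P p" by auto
    moreover have "P p \<le> c * a (chi a \<omega> C (\<Phi> p))" using allP by (rule spec)
    moreover have "c * a (chi a \<omega> C (\<Phi> p)) \<le> c * a 0" using a_le0 ck by simp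
    ultimately show "z \<le> c * a 0" by linarith
  qed
  have rP: "rearr P n \<le> c * a (n div k)" for n
  proof -
    have "rearr P n \<le> c * rearr a (n div k)"
      by (rule rearr_domin[OF inf_pair infinite_UNIV_nat P0 a0 null_bdd[OF alim] dPa'])
    also have "\<dots> \<le> c * a (n div k)" using rearr_dec_le[OF a0 dec] ck by (simp add: mult_left_mono)
    finally show ?thesis .
  qed
  have tP: "tensor \<beta> \<gamma> = (\<lambda>n. complex_of_real (rearr P n))" unfolding tensor_def P_def by simp
  have nt: "norm (tensor \<beta> \<gamma> n) = rearr P n" for n
    unfolding tP using rearr_nonneg[OF inf_pair P0 Pbd, of n] by simp
  have dt: "domin (\<lambda>n. norm (tensor \<beta> \<gamma> n)) a c k (\<lambda>n. n div k)"
    by (rule domin_div) (use ck rP nt in auto)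
  have lim: "(\<lambda>n. c * a (n div k)) \<longlonglongrightarrow> 0"
  proof -
    have "(\<lambda>n. a (n div k)) \<longlonglongrightarrow> 0"
      by (rule filterlim_compose[OF alim filterlim_at_top_div_const_nat[OF ck(2)]])
    from tendsto_mult[OF tendsto_const[of c] this] show ?thesis by simp
  qed
  have "tensor \<beta> \<gamma> \<longlonglongrightarrow> 0"
    by (rule Lim_null_comparison[OF _ lim]) (use nt rP in auto)
  then have tc0: "tensor \<beta> \<gamma> \<in> c0" unfolding c0_def by simp
  have ex: "\<exists>c k \<phi>. domin (\<lambda>m. norm (tensor \<beta> \<gamma> m)) a c k \<phi>" by (rule exI[of _ c], rule exI[of _ k], rule exI[of _ "\<lambda>n. n div k"], rule dt)
  show ?thesis unfolding Msp_def mem_Collect_eq using tc0 ex by (rule conjI)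
qed

lemma alpha_in_I:
  assumes I: "calkin I" and T: "{tensor \<beta> \<gamma> | \<beta> \<gamma>. \<beta> \<in> Msp a \<and> \<gamma> \<in> Msp a} \<subseteq> I"
  shows "(\<lambda>n. complex_of_real (a n)) \<in> I"
proof (cases "a 0 = 0")
  case True
  then have "a n = 0" for n using a_le0[of n] a0[of n] by simp
  then have "(\<lambda>n. complex_of_real (a n)) = (\<lambda>_. 0)" by auto
  then show ?thesis using I unfolding calkin_def by simp
next
  case False
  then have ap: "a 0 > 0" using a0[of 0] by simp
  let ?al = "\<lambda>n. complex_of_real (a n)"
  have alM: "?al \<in> Msp a" by (rule alpha_in_M[OF a0 dec alim])
  have tI: "tensor ?al ?al \<in> I" using T alM by blast
  have tM: "tensor ?al ?al \<in> Msp a" by (rule tensor_M[OF alM alM])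
  define x where "x = (\<lambda>n. complex_of_real (1 / a 0) * tensor ?al ?al n)"
  have xI: "x \<in> I" using I tI unfolding calkin_def x_def by blast
  have x0: "x \<in> c0" using M_calkin[OF a0 dec alim] xI tM unfolding calkin_def x_def by blast
  define P0 where "P0 = (\<lambda>(i, j). norm (?al i * ?al j))"
  have P0v: "P0 p = a (fst p) * a (snd p)" for p unfolding P0_def using a0 by (cases p) (simp add: norm_mult)
  have P00: "P0 p \<ge> 0" for p unfolding P0v using a0 by (intro mult_nonneg_nonneg)
  have P0b: "P0 p \<le> a 0 * a 0" for p unfolding P0v using a_le0 a0 by (intro mult_mono) auto
  have P0bd: "bdd_above (range P0)" using P0b by (intro bdd_aboveI[of _ "a 0 * a 0"]) auto
  have r0: "rearr P0 n \<ge> 0" for n by (rule rearr_nonneg[OF inf_pair P00 P0bd])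
  have nx: "norm (x n) = rearr P0 n / a 0" for n
    unfolding x_def tensor_def P0_def[symmetric] using r0[of n] ap by (simp add: norm_mult norm_divide)
  have low: "a m \<le> norm (x m)" for m
  proof -
    have "a 0 * a m \<le> rearr P0 m"
    proof (rule rearr_ge[OF _ _ _ P0bd])
      show "finite ((\<lambda>i. (0::nat, i)) ` {..m})" by simp
      show "m < card ((\<lambda>i. (0::nat, i)) ` {..m})" by (subst card_image) (auto simp: inj_on_def)
      fix p assume "p \<in> (\<lambda>i. (0::nat, i)) ` {..m}"
      then obtain i where "i \<le> m" "p = (0, i)" by auto
      then show "a 0 * a m \<le> P0 p" unfolding P0v using dec ap by (simp add: decseq_def)
    qed
    then show ?thesis unfolding nx using ap by (simp add: field_simps)
  qed
  have xbd: "bdd_above (range (\<lambda>n. norm (x n)))"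
  proof (rule bdd_aboveI[of _ "a 0"])
    fix z assume "z \<in> range (\<lambda>n. norm (x n))" then obtain n where z: "z = norm (x n)" by auto
    have "rearr P0 n \<le> Sup (P0 ` (UNIV - {}))" by (rule rearr_le_elem[OF inf_pair P00 P0bd]) auto
    also have "\<dots> \<le> a 0 * a 0" using P0b by (intro cSup_least) auto
    finally show "z \<le> a 0" unfolding z nx using ap by (simp add: divide_le_eq)
  qed
  have dd: "domin a (\<lambda>n. norm (x n)) 1 1 (\<lambda>n. n)" by (rule domin_le[OF low])
  have "rearr a n \<le> 1 * rearr (\<lambda>n. norm (x n)) (n div 1)" for n
    by (rule rearr_domin[OF infinite_UNIV_nat infinite_UNIV_nat a0 norm_ge_zero xbd dd])
  then have rle: "rearr a n \<le> rearr (\<lambda>n. norm (x n)) n" for n by simp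
  have eqa: "(\<lambda>k. norm (complex_of_real (a k))) = a" by (rule ext) (simp add: a0)
  have ineq: "\<forall>n. dstar ?al n \<le> dstar x n" unfolding dstar_def eqa using rle by blast
  have alc0: "?al \<in> c0" using alM unfolding Msp_def by blast
  have dom: "\<forall>\<gamma>\<in>I. \<forall>\<beta>\<in>c0. (\<forall>n. dstar \<beta> n \<le> dstar \<gamma> n) \<longrightarrow> \<beta> \<in> I"
    using I unfolding calkin_def by (rule conjunct2[OF conjunct2[OF conjunct2[OF conjunct2]]])
  show ?thesis using dom xI alc0 ineq by blast
qed

lemma final: "stable (calkin_hull {(\<lambda>n. complex_of_real (a n))})"
proof -
  let ?T = "{tensor \<beta> \<gamma> | \<beta> \<gamma>. \<beta> \<in> Msp a \<and> \<gamma> \<in> Msp a}"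
  have H: "calkin_hull {(\<lambda>n. complex_of_real (a n))} = Msp a" by (rule hull_eq[OF a0 dec alim])
  have cM: "calkin (Msp a)" by (rule M_calkin[OF a0 dec alim])
  have TM: "?T \<subseteq> Msp a" using tensor_M by blast
  have "calkin_hull ?T = Msp a"
  proof
    show "calkin_hull ?T \<subseteq> Msp a" unfolding calkin_hull_def using cM TM by blast
    show "Msp a \<subseteq> calkin_hull ?T" unfolding calkin_hull_def
      using M_sub[OF a0 dec alim] alpha_in_I by blast
  qed
  then show ?thesis unfolding stable_def H using cM by simp
qed

end


theorem corollary2p9:
  fixes \<alpha> :: "nat \<Rightarrow> real" and \<omega> C :: real
  assumes "\<And>n. \<alpha> n \<ge> 0"
    and "decseq \<alpha>"
    and "\<alpha> \<longlonglongrightarrow> 0"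
    and "\<alpha> 0 \<le> 1"
    and "0 < \<omega>" and "\<omega> < 1"
    and "C > 0"
    and "\<And>n j. j \<ge> 1 \<Longrightarrow>
           real (Kw \<omega> \<alpha> (n + j)) \<ge> C * (\<Sum>i\<le>n. real (Kw \<omega> \<alpha> i)) ^ 2"
  shows "stable (calkin_hull {(\<lambda>n. complex_of_real (\<alpha> n))})"
  by (rule final[OF assms])

end
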